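(* Let $K$ be a kernel as below, $\mathbf{n}\in\mathbb{N}^d$, and suppose $\rho_{\mathbf{j}}(\mathbf{0})\ne0$ for all $\mathbf{j}\in\Omega_{\mathbf{n}}^*$. Then for every function $f:\mathbb{T}^d\to\mathbb{R}$ there is a unique sk-spline $s\in SK(\Lambda_{\mathbf{n}})$ satisfying $s(\mathbf{x}_{\mathbf{j}})=f(\mathbf{x}_{\mathbf{j}})$ for all $\mathbf{j}\in\Omega_{\mathbf{n}}$, and it is given by $$s(\mathbf{x})=sk_{\mathbf{n}}(f,\mathbf{x})=\sum_{\mathbf{k}\in\Omega_{\mathbf{n}}}f(\mathbf{x}_{\mathbf{k}})\,\widetilde{sk}_{\mathbf{n}}(\mathbf{x}-\mathbf{x}_{\mathbf{k}}),\qquad\mathbf{x}\in\mathbb{T}^d.$$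
   Context: $\mathbb{T}^d=(\mathbb{R}/2\pi\mathbb{Z})^d$. Kernel: $K(\mathbf{x})=\sum_{\mathbf{l}\in\mathbb{Z}^d}a_{\mathbf{l}}e^{i\mathbf{l}\cdot\mathbf{x}}$ with $(a_{\mathbf{l}})$ real, $a_{\mathbf{l}}=a_{-\mathbf{l}}$, $\sum_{\mathbf{l}}|a_{\mathbf{l}}|<\infty$. Notation: $\mathbf{x}\cdot\mathbf{y}=\sum_ix_iy_i$; fix $\mathbf{n}\in\mathbb{N}^d$, $\mathbf{x}_{\mathbf{k}}=(\pi k_1/n_1,\dots,\pi k_d/n_d)$ for $\mathbf{k}\in\mathbb{Z}^d$, $\Omega_{\mathbf{n}}=\{\mathbf{j}\in\mathbb{Z}^d:0\le j_l\le 2n_l-1\}$, $\Omega_{\mathbf{n}}^*=\Omega_{\mathbf{n}}\setminus\{\mathbf{0}\}$, $\Lambda_{\mathbf{n}}=\{\mathbf{x}_{\mathbf{k}}:\mathbf{k}\in\Omega_{\mathbf{n}}\}$, $N=2^dn_1\cdots n_d$. For $\mathbf{j}\in\mathbb{Z}^d$: $\rho_{\mathbf{j}}(\mathbf{x})=\frac{2}{N}\sum_{\mathbf{k}\in\Omega_{\mathbf{n}}}\cos(\mathbf{j}\cdot\mathbf{x}_{\mathbf{k}})K(\mathbf{x}-\mathbf{x}_{\mathbf{k}})$. An sk-spline on $\Lambda_{\mathbf{n}}$ (associated with $K$) is a function $s(\mathbf{x})=c+\sum_{\mathbf{k}\in\Omega_{\mathbf{n}}}c_{\mathbf{k}}K(\mathbf{x}-\mathbf{x}_{\mathbf{k}})$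 with $c,c_{\mathbf{k}}\in\mathbb{R}$ and $\sum_{\mathbf{k}\in\Omega_{\mathbf{n}}}c_{\mathbf{k}}=0$; $SK(\Lambda_{\mathbf{n}})$ is the real vector space of these. The fundamental sk-spline is $\widetilde{sk}_{\mathbf{n}}(\mathbf{x})=\frac1N+\frac1N\sum_{\mathbf{j}\in\Omega_{\mathbf{n}}^*}\frac{\rho_{\mathbf{j}}(\mathbf{x})}{\rho_{\mathbf{j}}(\mathbf{0})}$. *)

theory Defs
  imports "HOL-Analysis.Analysis"
begin

text \<open>Dimension d is the cardinality of the finite index type 'd.
  Points of the torus are represented by their representatives in real^'d.\<close>

definition idot :: "int^'d::finite \<Rightarrow> real^'d \<Rightarrow> real" where
  "idot l x = (\<Sum>i\<in>UNIV. real_of_int (l$i) * x$i)"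

definition kernel_coeffs :: "(int^'d::finite \<Rightarrow> real) \<Rightarrow> bool" where
  "kernel_coeffs a \<longleftrightarrow> (\<forall>l. a l = a (-l)) \<and> (\<lambda>l. \<bar>a l\<bar>) summable_on UNIV"

text \<open>The kernel K(x) = sum_l a_l e^{i l.x}; it is real-valued for admissible a,
  so we take its real part to view it as a real function.\<close>
definition kernelC :: "(int^'d::finite \<Rightarrow> real) \<Rightarrow> real^'d \<Rightarrow> complex" where
  "kernelC a x = (\<Sum>\<^sub>\<infinity>l. complex_of_real (a l) * exp (\<i> * complex_of_real (idot l x)))"

definition kernel :: "(int^'d::finite \<Rightarrow> real) \<Rightarrow> real^'d \<Rightarrow> real" where
  "kernel a x = Re (kernelC a x)"

definition grid_pt :: "nat^'d::finite \<Rightarrow> int^'d \<Rightarrow> real^'d" where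
  "grid_pt n k = (\<chi> i. pi * real_of_int (k$i) / real (n$i))"

definition Omega :: "nat^'d::finite \<Rightarrow> (int^'d) set" where
  "Omega n = {j. \<forall>i. 0 \<le> j$i \<and> j$i \<le> 2 * int (n$i) - 1}"

definition Omega_star :: "nat^'d::finite \<Rightarrow> (int^'d) set" where
  "Omega_star n = Omega n - {0}"

definition Ncard :: "nat^'d::finite \<Rightarrow> real" where
  "Ncard n = 2 ^ CARD('d) * (\<Prod>i\<in>UNIV. real (n$i))"

definition rho :: "(int^'d::finite \<Rightarrow> real) \<Rightarrow> nat^'d \<Rightarrow> int^'d \<Rightarrow> real^'d \<Rightarrow> real" where
  "rho a n j x = 2 / Ncard n *
     (\<Sum>k\<in>Omega n. cos (idot j (grid_pt n k)) * kernel a (x - grid_pt n k))"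

definition SK :: "(int^'d::finite \<Rightarrow> real) \<Rightarrow> nat^'d \<Rightarrow> (real^'d \<Rightarrow> real) set" where
  "SK a n = {s. \<exists>c ck. (\<Sum>k\<in>Omega n. ck k) = 0 \<and>
      s = (\<lambda>x. c + (\<Sum>k\<in>Omega n. ck k * kernel a (x - grid_pt n k)))}"

definition sk_fund :: "(int^'d::finite \<Rightarrow> real) \<Rightarrow> nat^'d \<Rightarrow> real^'d \<Rightarrow> real" where
  "sk_fund a n x = 1 / Ncard n +
     1 / Ncard n * (\<Sum>j\<in>Omega_star n. rho a n j x / rho a n j 0)"

definition sk_interp :: "(int^'d::finite \<Rightarrow> real) \<Rightarrow> nat^'d \<Rightarrow> (real^'d \<Rightarrow> real) \<Rightarrow> real^'d \<Rightarrow> real" where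
  "sk_interp a n f x = (\<Sum>k\<in>Omega n. f (grid_pt n k) * sk_fund a n (x - grid_pt n k))"

definition torus_periodic :: "(real^'d::finite \<Rightarrow> real) \<Rightarrow> bool" where
  "torus_periodic f \<longleftrightarrow> (\<forall>x i. f (x + (\<chi> l. if l = i then 2 * pi else 0)) = f x)"

end

theory Submission
  imports Defs
begin


definition modv :: "nat^'d::finite \<Rightarrow> int^'d \<Rightarrow> int^'d" where
  "modv n k = (\<chi> i. k$i mod (2 * int (n$i)))"

lemma Omega_iff: "k \<in> Omega n \<longleftrightarrow> (\<forall>i. 0 \<le> k$i \<and> k$i < 2 * int (n$i))"
  unfolding Omega_def by auto

lemma modv_in:
  assumes "\<forall>i. n$i \<ge> 1" shows "modv n k \<in> Omega n"
  using assms unfolding Omega_iff modv_def by (auto intro!: pos_mod_bound pos_mod_sign simp: Suc_le_eq)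

lemma modv_id: "k \<in> Omega n \<Longrightarrow> modv n k = k"
  unfolding Omega_iff modv_def by (simp add: vec_eq_iff)

lemma Omega_eq: "Omega n = vec_lambda ` (PiE UNIV (\<lambda>i. {0..2 * int (n$i) - 1}))"
proof (rule set_eqI)
  fix k :: "int^'a"
  show "k \<in> Omega n \<longleftrightarrow> k \<in> vec_lambda ` (PiE UNIV (\<lambda>i. {0..2 * int (n$i) - 1}))"
  proof
    assume "k \<in> Omega n"
    then have "vec_nth k \<in> PiE UNIV (\<lambda>i. {0..2 * int (n$i) - 1})"
      unfolding Omega_def by auto
    then show "k \<in> vec_lambda ` (PiE UNIV (\<lambda>i. {0..2 * int (n$i) - 1}))"
      by (rule rev_image_eqI) simp
  next
    assume "k \<in> vec_lambda ` (PiE UNIV (\<lambda>i. {0..2 * int (n$i) - 1}))"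
    then show "k \<in> Omega n" unfolding Omega_def by auto
  qed
qed

lemma finite_Omega: "finite (Omega n)"
  unfolding Omega_eq by (intro finite_imageI finite_PiE) auto

lemma card_Omega:
  assumes "\<forall>i. n$i \<ge> 1" shows "real (card (Omega n)) = Ncard n"
proof -
  have inj: "inj_on vec_lambda (PiE UNIV (\<lambda>i. {0..2 * int (n$i) - 1}) :: (('a \<Rightarrow> int) set))"
    by (intro inj_onI) (simp add: vec_lambda_inject)
  have "card (Omega n) = (\<Prod>i\<in>UNIV. card {0..2 * int (n$i) - 1})"
    unfolding Omega_eq by (simp add: card_image[OF inj] card_PiE)
  also have "\<dots> = (\<Prod>i\<in>UNIV. 2 * n$i)"
    by (intro prod.cong) auto
  finally have "real (card (Omega n)) = (\<Prod>i\<in>(UNIV::'a set). 2 * real (n$i))"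
    by simp
  also have "\<dots> = Ncard n"
    unfolding Ncard_def by (simp add: prod.distrib)
  finally show ?thesis .
qed

lemma zero_Omega: assumes "\<forall>i. n$i \<ge> 1" shows "0 \<in> Omega n"
  using assms unfolding Omega_def by (auto simp: Suc_le_eq)

lemma mod_inj_aux:
  fixes k k' t M :: int
  assumes "0 \<le> k" "k < M" "0 \<le> k'" "k' < M" "(k + t) mod M = (k' + t) mod M"
  shows "k = k'"
proof -
  have "k mod M = (k + t - t) mod M" by simp
  also have "\<dots> = ((k + t) mod M - t) mod M" by (rule mod_diff_left_eq[symmetric])
  also have "\<dots> = ((k' + t) mod M - t) mod M" using assms(5) by simp
  also have "\<dots> = (k' + t - t) mod M" by (rule mod_diff_left_eq)
  finally show ?thesis using assms by simp
qed

lemma mod_inj_aux2: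
  fixes k k' t M :: int
  assumes "0 \<le> k" "k < M" "0 \<le> k'" "k' < M" "(t - k) mod M = (t - k') mod M"
  shows "k = k'"
proof -
  have "k mod M = (t - (t - k)) mod M" by simp
  also have "\<dots> = (t - (t - k) mod M) mod M" by (rule mod_diff_right_eq[symmetric])
  also have "\<dots> = (t - (t - k') mod M) mod M" using assms(5) by simp
  also have "\<dots> = (t - (t - k')) mod M" by (rule mod_diff_right_eq)
  finally show ?thesis using assms by simp
qed
lemma sum_Omega_shift:
  fixes g :: "int^'d::finite \<Rightarrow> 'b::comm_monoid_add"
  assumes n: "\<forall>i. n$i \<ge> 1" and per: "\<And>k. g (modv n k) = g k"
  shows "(\<Sum>k\<in>Omega n. g (k + t)) = (\<Sum>k\<in>Omega n. g k)"
proof -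
  let ?h = "\<lambda>k. modv n (k + t)"
  have inj: "inj_on ?h (Omega n)"
  proof (rule inj_onI)
    fix k k' assume k: "k \<in> Omega n" and k': "k' \<in> Omega n" and e: "?h k = ?h k'"
    show "k = k'"
    proof (subst vec_eq_iff, rule allI)
      fix i
      have h1: "(?h k)$i = (k$i + t$i) mod (2 * int (n$i))" "(?h k')$i = (k'$i + t$i) mod (2 * int (n$i))"
        unfolding modv_def by simp_all
      from e have "(?h k)$i = (?h k')$i" by simp
      then have "(k$i + t$i) mod (2 * int (n$i)) = (k'$i + t$i) mod (2 * int (n$i))"
        unfolding h1 .
      moreover have "0 \<le> k$i" "k$i < 2 * int (n$i)" "0 \<le> k'$i" "k'$i < 2 * int (n$i)"
        using k k' unfolding Omega_iff by auto
      ultimately show "k$i = k'$i" using mod_inj_aux by blast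
    qed
  qed
  have sub: "?h ` Omega n \<subseteq> Omega n" using modv_in[OF n] by auto
  have "?h ` Omega n = Omega n" by (rule endo_inj_surj[OF finite_Omega sub inj])
  then have bij: "bij_betw ?h (Omega n) (Omega n)" using inj by (simp add: bij_betw_def)
  have "(\<Sum>k\<in>Omega n. g (k + t)) = (\<Sum>k\<in>Omega n. g (?h k))" using per by simp
  also have "\<dots> = (\<Sum>k\<in>Omega n. g k)" by (rule sum.reindex_bij_betw[OF bij])
  finally show ?thesis .
qed

lemma sum_Omega_reflect:
  fixes g :: "int^'d::finite \<Rightarrow> 'b::comm_monoid_add"
  assumes n: "\<forall>i. n$i \<ge> 1" and per: "\<And>k. g (modv n k) = g k"
  shows "(\<Sum>k\<in>Omega n. g (t - k)) = (\<Sum>k\<in>Omega n. g k)"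
proof -
  let ?h = "\<lambda>k. modv n (t - k)"
  have inj: "inj_on ?h (Omega n)"
  proof (rule inj_onI)
    fix k k' assume k: "k \<in> Omega n" and k': "k' \<in> Omega n" and e: "?h k = ?h k'"
    show "k = k'"
    proof (subst vec_eq_iff, rule allI)
      fix i
      have h1: "(?h k)$i = (t$i - k$i) mod (2 * int (n$i))" "(?h k')$i = (t$i - k'$i) mod (2 * int (n$i))"
        unfolding modv_def by simp_all
      from e have "(?h k)$i = (?h k')$i" by simp
      then have "(t$i - k$i) mod (2 * int (n$i)) = (t$i - k'$i) mod (2 * int (n$i))"
        unfolding h1 .
      moreover have "0 \<le> k$i" "k$i < 2 * int (n$i)" "0 \<le> k'$i" "k'$i < 2 * int (n$i)"
        using k k' unfolding Omega_iff by auto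
      ultimately show "k$i = k'$i" using mod_inj_aux2 by blast
    qed
  qed
  have sub: "?h ` Omega n \<subseteq> Omega n" using modv_in[OF n] by auto
  have "?h ` Omega n = Omega n" by (rule endo_inj_surj[OF finite_Omega sub inj])
  then have bij: "bij_betw ?h (Omega n) (Omega n)" using inj by (simp add: bij_betw_def)
  have "(\<Sum>k\<in>Omega n. g (t - k)) = (\<Sum>k\<in>Omega n. g (?h k))" using per by simp
  also have "\<dots> = (\<Sum>k\<in>Omega n. g k)" by (rule sum.reindex_bij_betw[OF bij])
  finally show ?thesis .
qed

lemma grid_add: "grid_pt n (k + t) = grid_pt n k + grid_pt n t"
  unfolding grid_pt_def by (simp add: vec_eq_iff add_divide_distrib distrib_left)

lemma grid_diff: "grid_pt n (k - t) = grid_pt n k - grid_pt n t"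
  unfolding grid_pt_def by (simp add: vec_eq_iff diff_divide_distrib right_diff_distrib)

lemma grid_uminus: "grid_pt n (- k) = - grid_pt n k"
  unfolding grid_pt_def by (simp add: vec_eq_iff)

lemma grid_zero: "grid_pt n 0 = 0"
  unfolding grid_pt_def by (simp add: vec_eq_iff)

lemma grid_modv:
  assumes n: "\<forall>i. n$i \<ge> 1"
  shows "grid_pt n (modv n k) = grid_pt n k + (\<chi> i. 2 * pi * of_int (- (k$i div (2 * int (n$i)))))"
proof -
  { fix i
    have ni: "real (n$i) \<noteq> 0" using n[rule_format, of i] by auto
    have "k$i mod (2 * int (n$i)) = k$i - 2 * int (n$i) * (k$i div (2 * int (n$i)))"
      by (simp add: minus_div_mult_eq_mod[symmetric] algebra_simps)
    then have "real_of_int (k$i mod (2 * int (n$i))) = real_of_int (k$i) - 2 * real (n$i) * real_of_int (k$i div (2 * int (n$i)))"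
      by simp
    then have "pi * real_of_int (k$i mod (2 * int (n$i))) / real (n$i)
       = pi * (real_of_int (k$i) - 2 * real (n$i) * real_of_int (k$i div (2 * int (n$i)))) / real (n$i)"
      by simp
    also have "\<dots> = pi * real_of_int (k$i) / real (n$i) + 2 * pi * real_of_int (- (k$i div (2 * int (n$i))))"
      using ni by (simp add: field_simps)
    finally have "pi * real_of_int (k$i mod (2 * int (n$i))) / real (n$i)
       = pi * real_of_int (k$i) / real (n$i) + 2 * pi * real_of_int (- (k$i div (2 * int (n$i))))" .
  }
  then show ?thesis unfolding grid_pt_def modv_def by (simp add: vec_eq_iff)
qed

lemma idot_add: "idot j (x + y) = idot j x + idot j y"
  unfolding idot_def by (simp add: distrib_left sum.distrib)

lemma idot_diff: "idot j (x - y) = idot j x - idot j y"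
  unfolding idot_def by (simp add: right_diff_distrib sum_subtractf)

lemma idot_uminus: "idot j (- x) = - idot j x"
  unfolding idot_def by (simp add: sum_negf)

lemma idot_zero [simp]: "idot 0 x = 0" "idot j 0 = 0"
  unfolding idot_def by simp_all

lemma idot_2pi: "idot j (\<chi> i. 2 * pi * of_int (m i)) = 2 * pi * of_int (\<Sum>i\<in>UNIV. j$i * m i)"
  unfolding idot_def by (simp add: sum_distrib_left algebra_simps)

lemma th_sym: "idot j (grid_pt n k) = idot k (grid_pt n j)"
  unfolding idot_def grid_pt_def by (intro sum.cong) auto


lemma idot_uminus_l: "idot (- l) x = - idot l x"
  unfolding idot_def by (simp add: sum_negf)

lemma th_modv:
  assumes n: "\<forall>i. n$i \<ge> 1"
  shows "\<exists>z::int. idot j (grid_pt n (modv n k)) = idot j (grid_pt n k) + 2 * pi * of_int z"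
  unfolding grid_modv[OF n] idot_add idot_2pi by blast

lemma cos_2pi_shift: "cos (x + 2 * pi * of_int z) = cos x"
  by (simp add: cos_add)
lemma sin_2pi_shift: "sin (x + 2 * pi * of_int z) = sin x"
  by (simp add: sin_add)
lemma cis_2pi_shift: "cis (x + 2 * pi * of_int z) = cis x"
  by (simp add: complex_eq_iff cos_add sin_add)

lemma cis_th_modv:
  assumes n: "\<forall>i. n$i \<ge> 1"
  shows "cis (idot j (grid_pt n (modv n k))) = cis (idot j (grid_pt n k))"
  using th_modv[OF n, of j k] cis_2pi_shift by metis

lemma kernelC_per: "kernelC a (x + (\<chi> i. 2 * pi * of_int (m i))) = kernelC a x"
proof -
  have "complex_of_real (a l) * exp (\<i> * complex_of_real (idot l (x + (\<chi> i. 2 * pi * of_int (m i)))))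
      = complex_of_real (a l) * exp (\<i> * complex_of_real (idot l x))" for l
    unfolding cis_conv_exp[symmetric] idot_add idot_2pi cis_2pi_shift ..
  then show ?thesis unfolding kernelC_def by (simp only:)
qed

lemma kernel_per: "kernel a (x + (\<chi> i. 2 * pi * of_int (m i))) = kernel a x"
  unfolding kernel_def kernelC_per ..

lemma kernel_even:
  assumes "kernel_coeffs a" shows "kernel a (- x) = kernel a x"
proof -
  have ev: "a (- l) = a l" for l using assms unfolding kernel_coeffs_def by metis
  let ?f = "\<lambda>l. complex_of_real (a l) * cis (idot l x)"
  have "kernelC a (- x) = infsum (\<lambda>l. ?f (- l)) UNIV"
    unfolding kernelC_def cis_conv_exp[symmetric]
    by (intro infsum_cong) (simp add: ev idot_uminus idot_uminus_l)
  also have "\<dots> = infsum ?f UNIV"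
    by (rule infsum_reindex_bij_betw) (simp add: bij_uminus)
  also have "\<dots> = kernelC a x" unfolding kernelC_def cis_conv_exp[symmetric] ..
  finally show ?thesis unfolding kernel_def by simp
qed

lemma kernel_modv:
  assumes n: "\<forall>i. n$i \<ge> 1"
  shows "kernel a (x + grid_pt n (modv n k)) = kernel a (x + grid_pt n k)"
  unfolding grid_modv[OF n] add.assoc[symmetric] by (rule kernel_per)

lemma kernel_modv_minus:
  assumes n: "\<forall>i. n$i \<ge> 1"
  shows "kernel a (x - grid_pt n (modv n k)) = kernel a (x - grid_pt n k)"
proof -
  have "x - grid_pt n (modv n k) = (x - grid_pt n k) + (\<chi> i. 2 * pi * of_int (k$i div (2 * int (n$i))))"
    unfolding grid_modv[OF n] by (simp add: vec_eq_iff)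
  then show ?thesis by (simp only: kernel_per)
qed

lemma kernel_modv0:
  assumes n: "\<forall>i. n$i \<ge> 1"
  shows "kernel a (grid_pt n (modv n k)) = kernel a (grid_pt n k)"
  using kernel_modv[OF n, of a 0 k] by simp

lemma orth:
  assumes n: "\<forall>i. n$i \<ge> 1"
  shows "(\<Sum>j\<in>Omega n. cis (idot m (grid_pt n j))) = (if modv n m = 0 then of_nat (card (Omega n)) else 0)"
proof (cases "modv n m = 0")
  case True
  have "cis (idot m (grid_pt n j)) = 1" for j
  proof -
    obtain z where "idot j (grid_pt n (modv n m)) = idot j (grid_pt n m) + 2 * pi * of_int z"
      using th_modv[OF n] by blast
    then have "idot m (grid_pt n j) = 0 + 2 * pi * of_int (- z)"
      using True by (simp add: th_sym[of m n j] grid_zero)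
    then show ?thesis by (simp only: cis_2pi_shift cis_zero)
  qed
  then show ?thesis using True by simp
next
  case False
  then obtain i where i: "m$i mod (2 * int (n$i)) \<noteq> 0"
    unfolding modv_def by (auto simp: vec_eq_iff)
  define e :: "int^'a" where "e = (\<chi> l. if l = i then 1 else 0)"
  let ?S = "\<Sum>j\<in>Omega n. cis (idot m (grid_pt n j))"
  have ni: "real (n$i) > 0" using n[rule_format, of i] by auto
  have "idot m (grid_pt n e) = (\<Sum>l\<in>UNIV. if l = i then pi * real_of_int (m$i) / real (n$i) else 0)"
    unfolding idot_def grid_pt_def e_def by (intro sum.cong) auto
  then have the: "idot m (grid_pt n e) = pi * real_of_int (m$i) / real (n$i)"
    by simp
  have "(\<Sum>j\<in>Omega n. cis (idot m (grid_pt n (j + e)))) = ?S"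
    by (rule sum_Omega_shift[OF n]) (rule cis_th_modv[OF n])
  moreover have "(\<Sum>j\<in>Omega n. cis (idot m (grid_pt n (j + e)))) = cis (idot m (grid_pt n e)) * ?S"
    by (simp add: grid_add idot_add cis_mult[symmetric] sum_distrib_left mult.commute)
  ultimately have "(cis (idot m (grid_pt n e)) - 1) * ?S = 0" by (simp add: algebra_simps)
  moreover have "cis (idot m (grid_pt n e)) \<noteq> 1"
  proof
    assume "cis (idot m (grid_pt n e)) = 1"
    then have "cos (pi * real_of_int (m$i) / real (n$i)) = 1" unfolding the
      by (metis cis.sel(1) one_complex.sel(1))
    then obtain z :: int where "pi * real_of_int (m$i) / real (n$i) = real_of_int z * 2 * pi"
      unfolding cos_one_2pi_int by blast
    then have "real_of_int (m$i) = real_of_int (2 * int (n$i) * z)" using ni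
      by (simp add: field_simps)
    then have "m$i = 2 * int (n$i) * z" by linarith
    then show False using i by simp
  qed
  ultimately show ?thesis using False by simp
qed



lemma per_cos: "\<exists>z::int. t = s + 2 * pi * of_int z \<Longrightarrow> cos t = cos s"
  using cos_2pi_shift by metis
lemma per_sin: "\<exists>z::int. t = s + 2 * pi * of_int z \<Longrightarrow> sin t = sin s"
  using sin_2pi_shift by metis

lemma th_modv_gen:
  assumes n: "\<forall>i. n$i \<ge> 1"
  shows "\<exists>z::int. idot j (grid_pt n (modv n p - k)) = idot j (grid_pt n (p - k)) + 2 * pi * of_int z"
proof -
  obtain z where "idot j (grid_pt n (modv n p)) = idot j (grid_pt n p) + 2 * pi * of_int z"
    using th_modv[OF n] by blast
  then show ?thesis by (intro exI[of _ z]) (simp add: grid_diff idot_diff)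
qed

lemma cos_th_modv:
  assumes n: "\<forall>i. n$i \<ge> 1"
  shows "cos (idot j (grid_pt n (modv n p - k))) = cos (idot j (grid_pt n (p - k)))"
  by (rule per_cos[OF th_modv_gen[OF n]])

lemma cos_th_modv0:
  assumes n: "\<forall>i. n$i \<ge> 1"
  shows "cos (idot j (grid_pt n (modv n p))) = cos (idot j (grid_pt n p))"
  using cos_th_modv[OF n, of j p 0] by simp

lemma sin_th_modv0:
  assumes n: "\<forall>i. n$i \<ge> 1"
  shows "sin (idot j (grid_pt n (modv n p))) = sin (idot j (grid_pt n p))"
  using per_sin[OF th_modv_gen[OF n, of j p 0]] by simp

lemma cos_c_th_modv:
  assumes n: "\<forall>i. n$i \<ge> 1"
  shows "cos (c - idot j (grid_pt n (modv n p))) = cos (c - idot j (grid_pt n p))"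
proof -
  obtain z where "idot j (grid_pt n (modv n p)) = idot j (grid_pt n p) + 2 * pi * of_int z"
    using th_modv[OF n] by blast
  then have "c - idot j (grid_pt n (modv n p)) = (c - idot j (grid_pt n p)) + 2 * pi * of_int (- z)"
    by simp
  then show ?thesis by (simp only: cos_2pi_shift)
qed

lemma modv_diff_zero:
  assumes "q \<in> Omega n" "k \<in> Omega n"
  shows "modv n (q - k) = 0 \<longleftrightarrow> k = q"
proof
  assume h: "modv n (q - k) = 0"
  show "k = q"
  proof (subst vec_eq_iff, rule allI)
    fix i
    from h have "(q$i - k$i) mod (2 * int (n$i)) = (q$i - q$i) mod (2 * int (n$i))"
      unfolding modv_def by (simp add: vec_eq_iff)
    moreover have "0 \<le> k$i" "k$i < 2 * int (n$i)" "0 \<le> q$i" "q$i < 2 * int (n$i)"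
      using assms unfolding Omega_iff by auto
    ultimately show "k$i = q$i" using mod_inj_aux2 by blast
  qed
qed (simp add: modv_def vec_eq_iff)

lemma rho0:
  assumes "kernel_coeffs a"
  shows "rho a n j 0 = 2 / Ncard n * (\<Sum>k\<in>Omega n. cos (idot j (grid_pt n k)) * kernel a (grid_pt n k))"
  unfolding rho_def using kernel_even[OF assms] by simp

lemma sinsum:
  assumes a: "kernel_coeffs a" and n: "\<forall>i. n$i \<ge> 1"
  shows "(\<Sum>k\<in>Omega n. sin (idot j (grid_pt n k)) * kernel a (grid_pt n k)) = 0"
proof -
  let ?g = "\<lambda>k. sin (idot j (grid_pt n k)) * kernel a (grid_pt n k)"
  have "(\<Sum>k\<in>Omega n. ?g (0 - k)) = (\<Sum>k\<in>Omega n. ?g k)"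
    by (rule sum_Omega_reflect[OF n]) (simp add: sin_th_modv0[OF n] kernel_modv0[OF n])
  moreover have "(\<Sum>k\<in>Omega n. ?g (0 - k)) = - (\<Sum>k\<in>Omega n. ?g k)"
    by (simp add: grid_uminus idot_uminus kernel_even[OF a] sum_negf)
  ultimately show ?thesis by simp
qed

lemma rho_grid:
  assumes a: "kernel_coeffs a" and n: "\<forall>i. n$i \<ge> 1"
  shows "rho a n j (grid_pt n p) = cos (idot j (grid_pt n p)) * rho a n j 0"
proof -
  let ?A = "idot j (grid_pt n p)"
  let ?g = "\<lambda>k. cos (?A - idot j (grid_pt n k)) * kernel a (grid_pt n k)"
  have "(\<Sum>k\<in>Omega n. cos (idot j (grid_pt n k)) * kernel a (grid_pt n p - grid_pt n k))
      = (\<Sum>k\<in>Omega n. ?g (p - k))"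
    by (simp add: grid_diff idot_diff)
  also have "\<dots> = (\<Sum>k\<in>Omega n. ?g k)"
    by (rule sum_Omega_reflect[OF n]) (simp add: cos_c_th_modv[OF n] kernel_modv0[OF n])
  also have "\<dots> = cos ?A * (\<Sum>k\<in>Omega n. cos (idot j (grid_pt n k)) * kernel a (grid_pt n k))
      + sin ?A * (\<Sum>k\<in>Omega n. sin (idot j (grid_pt n k)) * kernel a (grid_pt n k))"
    by (simp add: cos_diff sum_distrib_left sum.distrib algebra_simps)
  also have "\<dots> = cos ?A * (\<Sum>k\<in>Omega n. cos (idot j (grid_pt n k)) * kernel a (grid_pt n k))"
    using sinsum[OF a n] by simp
  finally have "(\<Sum>k\<in>Omega n. cos (idot j (grid_pt n k)) * kernel a (grid_pt n p - grid_pt n k))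
     = cos ?A * (\<Sum>k\<in>Omega n. cos (idot j (grid_pt n k)) * kernel a (grid_pt n k))" .
  then show ?thesis unfolding rho0[OF a] by (simp add: rho_def)
qed

lemma cos_orth:
  assumes n: "\<forall>i. n$i \<ge> 1"
  shows "(\<Sum>j\<in>Omega n. cos (idot m (grid_pt n j))) = (if modv n m = 0 then real (card (Omega n)) else 0)"
proof -
  have "(\<Sum>j\<in>Omega n. cos (idot m (grid_pt n j))) = Re (\<Sum>j\<in>Omega n. cis (idot m (grid_pt n j)))"
    by simp
  then show ?thesis unfolding orth[OF n] by simp
qed

lemma Ncard_pos: assumes n: "\<forall>i. n$i \<ge> 1" shows "Ncard n > 0"
  unfolding card_Omega[OF n, symmetric] using finite_Omega zero_Omega[OF n]
  by (simp add: card_gt_0_iff; blast)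

lemma fund_grid:
  assumes a: "kernel_coeffs a" and n: "\<forall>i. n$i \<ge> 1"
    and r: "\<forall>j\<in>Omega_star n. rho a n j 0 \<noteq> 0"
  shows "sk_fund a n (grid_pt n p) = (if modv n p = 0 then 1 else 0)"
proof -
  have N: "Ncard n > 0" by (rule Ncard_pos[OF n])
  have "(\<Sum>j\<in>Omega_star n. rho a n j (grid_pt n p) / rho a n j 0)
      = (\<Sum>j\<in>Omega_star n. cos (idot j (grid_pt n p)))"
    using r by (intro sum.cong) (auto simp: rho_grid[OF a n])
  moreover have "(\<Sum>j\<in>Omega n. cos (idot j (grid_pt n p)))
      = 1 + (\<Sum>j\<in>Omega_star n. cos (idot j (grid_pt n p)))"
    unfolding Omega_star_def by (subst sum.remove[OF finite_Omega zero_Omega[OF n]]) simp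
  moreover have "(\<Sum>j\<in>Omega n. cos (idot j (grid_pt n p))) = (if modv n p = 0 then Ncard n else 0)"
    using cos_orth[OF n, of p] th_sym[of _ n p] card_Omega[OF n] by simp
  ultimately show ?thesis unfolding sk_fund_def using N
    by (auto simp: field_simps)
qed

lemma interp_grid:
  assumes a: "kernel_coeffs a" and n: "\<forall>i. n$i \<ge> 1"
    and r: "\<forall>j\<in>Omega_star n. rho a n j 0 \<noteq> 0" and q: "q \<in> Omega n"
  shows "sk_interp a n f (grid_pt n q) = f (grid_pt n q)"
proof -
  have "sk_interp a n f (grid_pt n q) = (\<Sum>k\<in>Omega n. if k = q then f (grid_pt n k) else 0)"
    unfolding sk_interp_def
    by (intro sum.cong) (auto simp: grid_diff[symmetric] fund_grid[OF a n r] modv_diff_zero[OF q])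
  then show ?thesis using q by (simp add: sum.delta[OF finite_Omega])
qed



definition beta :: "(int^'d::finite \<Rightarrow> real) \<Rightarrow> nat^'d \<Rightarrow> int^'d \<Rightarrow> real" where
  "beta a n m = (\<Sum>j\<in>Omega_star n. 2 / (Ncard n ^ 2 * rho a n j 0) * cos (idot j (grid_pt n m)))"

lemma finite_Omega_star: "finite (Omega_star n)"
  unfolding Omega_star_def using finite_Omega by simp

lemma fund_expand:
  assumes n: "\<forall>i. n$i \<ge> 1"
  shows "sk_fund a n x = 1 / Ncard n + (\<Sum>m\<in>Omega n. beta a n m * kernel a (x - grid_pt n m))"
proof -
  have N: "Ncard n \<noteq> 0" using Ncard_pos[OF n] by simp
  have "(\<Sum>m\<in>Omega n. beta a n m * kernel a (x - grid_pt n m))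
      = (\<Sum>m\<in>Omega n. \<Sum>j\<in>Omega_star n. 2 / (Ncard n ^ 2 * rho a n j 0) * (cos (idot j (grid_pt n m)) * kernel a (x - grid_pt n m)))"
    unfolding beta_def by (simp add: sum_distrib_right mult.assoc)
  also have "\<dots> = (\<Sum>j\<in>Omega_star n. \<Sum>m\<in>Omega n. 2 / (Ncard n ^ 2 * rho a n j 0) * (cos (idot j (grid_pt n m)) * kernel a (x - grid_pt n m)))"
    by (rule sum.swap)
  also have "\<dots> = (\<Sum>j\<in>Omega_star n. 1 / Ncard n * (rho a n j x / rho a n j 0))"
  proof (rule sum.cong[OF refl])
    fix j
    show "(\<Sum>m\<in>Omega n. 2 / (Ncard n ^ 2 * rho a n j 0) * (cos (idot j (grid_pt n m)) * kernel a (x - grid_pt n m)))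
        = 1 / Ncard n * (rho a n j x / rho a n j 0)"
      unfolding rho_def sum_distrib_left[symmetric] using N
      by (simp add: field_simps power2_eq_square)
  qed
  also have "\<dots> = 1 / Ncard n * (\<Sum>j\<in>Omega_star n. rho a n j x / rho a n j 0)"
    by (simp add: sum_distrib_left)
  finally show ?thesis unfolding sk_fund_def by simp
qed

lemma cos_sum_zero:
  assumes n: "\<forall>i. n$i \<ge> 1" and j: "j \<in> Omega_star n"
  shows "(\<Sum>m\<in>Omega n. cos (idot j (grid_pt n m))) = 0"
proof -
  have "modv n j = j" "j \<noteq> 0" using j modv_id unfolding Omega_star_def by auto
  then show ?thesis using cos_orth[OF n, of j] by simp
qed

lemma beta_sum0:
  assumes n: "\<forall>i. n$i \<ge> 1"
  shows "(\<Sum>m\<in>Omega n. beta a n m) = 0"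
proof -
  have "(\<Sum>m\<in>Omega n. beta a n m)
      = (\<Sum>j\<in>Omega_star n. 2 / (Ncard n ^ 2 * rho a n j 0) * (\<Sum>m\<in>Omega n. cos (idot j (grid_pt n m))))"
    unfolding beta_def sum_distrib_left by (rule sum.swap)
  also have "\<dots> = 0" using cos_sum_zero[OF n] by simp
  finally show ?thesis .
qed

lemma beta_modv:
  assumes n: "\<forall>i. n$i \<ge> 1"
  shows "beta a n (modv n p - k) = beta a n (p - k)"
  unfolding beta_def by (simp add: cos_th_modv[OF n])

lemma beta_shift_sum:
  assumes n: "\<forall>i. n$i \<ge> 1"
  shows "(\<Sum>p\<in>Omega n. beta a n (p - k)) = 0"
proof -
  have "(\<Sum>p\<in>Omega n. beta a n (p + (- k))) = (\<Sum>p\<in>Omega n. beta a n p)"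
    by (rule sum_Omega_shift[OF n]) (use beta_modv[OF n, of a _ 0] in simp)
  then show ?thesis using beta_sum0[OF n] by simp
qed

lemma fund_shift:
  assumes n: "\<forall>i. n$i \<ge> 1"
  shows "sk_fund a n (x - grid_pt n k)
     = 1 / Ncard n + (\<Sum>p\<in>Omega n. beta a n (p - k) * kernel a (x - grid_pt n p))"
proof -
  let ?g = "\<lambda>p. beta a n (p - k) * kernel a (x - grid_pt n p)"
  have "(\<Sum>m\<in>Omega n. ?g (m + k)) = (\<Sum>m\<in>Omega n. ?g m)"
    by (rule sum_Omega_shift[OF n]) (simp add: beta_modv[OF n] kernel_modv_minus[OF n])
  moreover have "(\<Sum>m\<in>Omega n. beta a n m * kernel a (x - grid_pt n k - grid_pt n m)) = (\<Sum>m\<in>Omega n. ?g (m + k))"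
    by (intro sum.cong) (simp_all add: grid_add algebra_simps)
  ultimately show ?thesis unfolding fund_expand[OF n] by simp
qed

lemma interp_SK:
  assumes n: "\<forall>i. n$i \<ge> 1"
  shows "sk_interp a n f \<in> SK a n"
proof -
  define c where "c = (\<Sum>k\<in>Omega n. f (grid_pt n k)) / Ncard n"
  define ck where "ck p = (\<Sum>k\<in>Omega n. f (grid_pt n k) * beta a n (p - k))" for p
  have "(\<Sum>p\<in>Omega n. ck p) = (\<Sum>k\<in>Omega n. f (grid_pt n k) * (\<Sum>p\<in>Omega n. beta a n (p - k)))"
    unfolding ck_def sum_distrib_left by (rule sum.swap)
  also have "\<dots> = 0" by (simp add: beta_shift_sum[OF n])
  finally have s0: "(\<Sum>p\<in>Omega n. ck p) = 0" .
  have "sk_interp a n f x = c + (\<Sum>p\<in>Omega n. ck p * kernel a (x - grid_pt n p))" for x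
  proof -
    have "sk_interp a n f x = (\<Sum>k\<in>Omega n. f (grid_pt n k) / Ncard n
        + (\<Sum>p\<in>Omega n. f (grid_pt n k) * beta a n (p - k) * kernel a (x - grid_pt n p)))"
      unfolding sk_interp_def fund_shift[OF n]
      by (simp add: distrib_left sum_distrib_left mult.assoc)
    also have "\<dots> = c + (\<Sum>p\<in>Omega n. \<Sum>k\<in>Omega n. f (grid_pt n k) * beta a n (p - k) * kernel a (x - grid_pt n p))"
      unfolding c_def sum.distrib sum_divide_distrib by (subst sum.swap) (rule refl)
    also have "\<dots> = c + (\<Sum>p\<in>Omega n. ck p * kernel a (x - grid_pt n p))"
      unfolding ck_def by (simp add: sum_distrib_right)
    finally show ?thesis .
  qed
  then show ?thesis unfolding SK_def using s0 by blast
qed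



lemma Ksum:
  assumes a: "kernel_coeffs a" and n: "\<forall>i. n$i \<ge> 1"
  shows "(\<Sum>m\<in>Omega n. cis (idot j (grid_pt n m)) * of_real (kernel a (grid_pt n m)))
    = of_real (Ncard n / 2 * rho a n j 0)"
proof -
  have N: "Ncard n \<noteq> 0" using Ncard_pos[OF n] by simp
  have "(\<Sum>m\<in>Omega n. cis (idot j (grid_pt n m)) * of_real (kernel a (grid_pt n m)))
     = (\<Sum>m\<in>Omega n. of_real (cos (idot j (grid_pt n m)) * kernel a (grid_pt n m))
         + \<i> * of_real (sin (idot j (grid_pt n m)) * kernel a (grid_pt n m)))"
    by (intro sum.cong) (simp_all add: complex_eq_iff)
  also have "\<dots> = of_real (\<Sum>m\<in>Omega n. cos (idot j (grid_pt n m)) * kernel a (grid_pt n m))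
         + \<i> * of_real (\<Sum>m\<in>Omega n. sin (idot j (grid_pt n m)) * kernel a (grid_pt n m))"
    by (simp add: sum.distrib sum_distrib_left)
  also have "\<dots> = of_real (\<Sum>m\<in>Omega n. cos (idot j (grid_pt n m)) * kernel a (grid_pt n m))"
    using sinsum[OF a n] by simp
  also have "(\<Sum>m\<in>Omega n. cos (idot j (grid_pt n m)) * kernel a (grid_pt n m)) = Ncard n / 2 * rho a n j 0"
    unfolding rho0[OF a] using N by simp
  finally show ?thesis .
qed

lemma inner_sum:
  assumes a: "kernel_coeffs a" and n: "\<forall>i. n$i \<ge> 1"
  shows "(\<Sum>q\<in>Omega n. cis (idot j (grid_pt n q)) * of_real (kernel a (grid_pt n q - grid_pt n k)))
    = cis (idot j (grid_pt n k)) * of_real (Ncard n / 2 * rho a n j 0)"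
proof -
  let ?g = "\<lambda>m. cis (idot j (grid_pt n m)) * of_real (kernel a (grid_pt n m))"
  have "(\<Sum>q\<in>Omega n. cis (idot j (grid_pt n q)) * of_real (kernel a (grid_pt n q - grid_pt n k)))
      = (\<Sum>q\<in>Omega n. cis (idot j (grid_pt n k)) * ?g (q + - k))"
  proof (intro sum.cong refl)
    fix q
    have "cis (idot j (grid_pt n q)) = cis (idot j (grid_pt n k)) * cis (idot j (grid_pt n (q + - k)))"
      unfolding cis_mult by (simp add: grid_diff idot_diff)
    then show "cis (idot j (grid_pt n q)) * of_real (kernel a (grid_pt n q - grid_pt n k))
        = cis (idot j (grid_pt n k)) * ?g (q + - k)"
      by (simp add: grid_diff[symmetric])
  qed
  also have "\<dots> = cis (idot j (grid_pt n k)) * (\<Sum>q\<in>Omega n. ?g (q + - k))"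
    by (simp add: sum_distrib_left)
  also have "(\<Sum>q\<in>Omega n. ?g (q + - k)) = (\<Sum>q\<in>Omega n. ?g q)"
    by (rule sum_Omega_shift[OF n]) (simp add: cis_th_modv[OF n] kernel_modv0[OF n])
  finally show ?thesis unfolding Ksum[OF a n] .
qed

lemma uniq_coeffs:
  assumes a: "kernel_coeffs a" and n: "\<forall>i. n$i \<ge> 1"
    and r: "\<forall>j\<in>Omega_star n. rho a n j 0 \<noteq> 0"
    and d0: "(\<Sum>k\<in>Omega n. d k) = 0"
    and vals: "\<forall>q\<in>Omega n. c + (\<Sum>k\<in>Omega n. d k * kernel a (grid_pt n q - grid_pt n k)) = 0"
    and p: "p \<in> Omega n"
  shows "d p = 0"
proof -
  have N: "Ncard n > 0" by (rule Ncard_pos[OF n])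
  define D where "D j = (\<Sum>k\<in>Omega n. of_real (d k) * cis (idot j (grid_pt n k)))" for j
  have Dz: "D j = 0" if j: "j \<in> Omega n" for j
  proof (cases "j = 0")
    case True
    then show ?thesis unfolding D_def using d0 by (simp flip: of_real_sum)
  next
    case False
    then have js: "j \<in> Omega_star n" using j unfolding Omega_star_def by simp
    have mj: "modv n j = j" using modv_id[OF j] .
    have "0 = (\<Sum>q\<in>Omega n. cis (idot j (grid_pt n q)) *
         of_real (c + (\<Sum>k\<in>Omega n. d k * kernel a (grid_pt n q - grid_pt n k))))"
      using vals by simp
    also have "\<dots> = of_real c * (\<Sum>q\<in>Omega n. cis (idot j (grid_pt n q)))
        + (\<Sum>k\<in>Omega n. of_real (d k) * (\<Sum>q\<in>Omega n. cis (idot j (grid_pt n q)) * of_real (kernel a (grid_pt n q - grid_pt n k))))"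
      apply (simp add: distrib_left sum.distrib sum_distrib_left)
      apply (subst sum.swap)
      apply (simp add: algebra_simps)
      done
    also have "\<dots> = D j * of_real (Ncard n / 2 * rho a n j 0)"
      unfolding inner_sum[OF a n] orth[OF n] D_def using mj False
      by (simp add: sum_distrib_right mult.assoc)
    finally have "D j * of_real (Ncard n / 2 * rho a n j 0) = 0" by simp
    moreover have "rho a n j 0 \<noteq> 0" using r js by blast
    ultimately show ?thesis using N by simp
  qed
  have "0 = (\<Sum>j\<in>Omega n. D j * cis (- idot j (grid_pt n p)))" using Dz by simp
  also have "\<dots> = (\<Sum>k\<in>Omega n. of_real (d k) * (\<Sum>j\<in>Omega n. cis (idot (k - p) (grid_pt n j))))"
  proof -
    have "(\<Sum>j\<in>Omega n. D j * cis (- idot j (grid_pt n p)))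
       = (\<Sum>j\<in>Omega n. \<Sum>k\<in>Omega n. of_real (d k) * cis (idot (k - p) (grid_pt n j)))"
    proof (intro sum.cong refl)
      fix j
      have "cis (idot j (grid_pt n k)) * cis (- idot j (grid_pt n p)) = cis (idot (k - p) (grid_pt n j))" for k
      proof -
        have "idot (k - p) (grid_pt n j) = idot j (grid_pt n k) - idot j (grid_pt n p)"
          by (simp only: th_sym[of "k - p" n j] grid_diff idot_diff)
        then show ?thesis by (simp add: cis_mult)
      qed
      then show "D j * cis (- idot j (grid_pt n p)) = (\<Sum>k\<in>Omega n. of_real (d k) * cis (idot (k - p) (grid_pt n j)))"
        unfolding D_def sum_distrib_right by (simp add: mult.assoc)
    qed
    also have "\<dots> = (\<Sum>k\<in>Omega n. \<Sum>j\<in>Omega n. of_real (d k) * cis (idot (k - p) (grid_pt n j)))"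
      by (rule sum.swap)
    finally show ?thesis by (simp add: sum_distrib_left)
  qed
  also have "\<dots> = (\<Sum>k\<in>Omega n. if k = p then of_real (d k) * of_nat (card (Omega n)) else 0)"
    by (intro sum.cong refl) (simp add: orth[OF n] modv_diff_zero[OF _ p])
  also have "\<dots> = of_real (d p) * of_nat (card (Omega n))"
    using p by (simp add: sum.delta[OF finite_Omega])
  finally have "of_real (d p) * (of_nat (card (Omega n)) :: complex) = 0" by simp
  moreover have "card (Omega n) \<noteq> 0" using card_0_eq[OF finite_Omega] zero_Omega[OF n] by blast
  ultimately show ?thesis by simp
qed

lemma SK_unique:
  assumes a: "kernel_coeffs a" and n: "\<forall>i. n$i \<ge> 1"
    and r: "\<forall>j\<in>Omega_star n. rho a n j 0 \<noteq> 0"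
    and s1: "s1 \<in> SK a n" and s2: "s2 \<in> SK a n"
    and eq: "\<forall>j\<in>Omega n. s1 (grid_pt n j) = s2 (grid_pt n j)"
  shows "s1 = s2"
proof -
  obtain c1 ck1 where 1: "(\<Sum>k\<in>Omega n. ck1 k) = 0"
    "s1 = (\<lambda>x. c1 + (\<Sum>k\<in>Omega n. ck1 k * kernel a (x - grid_pt n k)))"
    using s1 unfolding SK_def by blast
  obtain c2 ck2 where 2: "(\<Sum>k\<in>Omega n. ck2 k) = 0"
    "s2 = (\<lambda>x. c2 + (\<Sum>k\<in>Omega n. ck2 k * kernel a (x - grid_pt n k)))"
    using s2 unfolding SK_def by blast
  define d where "d k = ck1 k - ck2 k" for k
  define c where "c = c1 - c2"
  have diff: "s1 x - s2 x = c + (\<Sum>k\<in>Omega n. d k * kernel a (x - grid_pt n k))" for x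
    unfolding 1 2 c_def d_def by (simp add: sum_subtractf left_diff_distrib)
  have d0: "(\<Sum>k\<in>Omega n. d k) = 0" unfolding d_def using 1 2 by (simp add: sum_subtractf)
  have vals: "\<forall>q\<in>Omega n. c + (\<Sum>k\<in>Omega n. d k * kernel a (grid_pt n q - grid_pt n k)) = 0"
  proof
    fix q assume q: "q \<in> Omega n"
    have "s1 (grid_pt n q) - s2 (grid_pt n q) = 0" using eq q by simp
    then show "c + (\<Sum>k\<in>Omega n. d k * kernel a (grid_pt n q - grid_pt n k)) = 0"
      unfolding diff .
  qed
  have dz: "d p = 0" if "p \<in> Omega n" for p
    by (rule uniq_coeffs[OF a n r d0 vals that])
  have "c + (\<Sum>k\<in>Omega n. d k * kernel a (grid_pt n 0 - grid_pt n k)) = 0"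
    using vals zero_Omega[OF n] by blast
  then have "c = 0" using dz by simp
  then have "s1 x - s2 x = 0" for x unfolding diff using dz by simp
  then show ?thesis by (simp add: fun_eq_iff)
qed

theorem theorem4p5:
  fixes a :: "int^'d::finite \<Rightarrow> real" and n :: "nat^'d" and f :: "real^'d \<Rightarrow> real"
  assumes "kernel_coeffs a"
    and "\<forall>i. n$i \<ge> 1"
    and "\<forall>j\<in>Omega_star n. rho a n j 0 \<noteq> 0"
    and "torus_periodic f"
  shows "(\<exists>!s. s \<in> SK a n \<and> (\<forall>j\<in>Omega n. s (grid_pt n j) = f (grid_pt n j)))
    \<and> sk_interp a n f \<in> SK a n
    \<and> (\<forall>j\<in>Omega n. sk_interp a n f (grid_pt n j) = f (grid_pt n j))"
proof -
  have I: "sk_interp a n f \<in> SK a n" by (rule interp_SK[OF assms(2)])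
  have G: "\<forall>j\<in>Omega n. sk_interp a n f (grid_pt n j) = f (grid_pt n j)"
    using interp_grid[OF assms(1-3)] by blast
  have U: "\<exists>!s. s \<in> SK a n \<and> (\<forall>j\<in>Omega n. s (grid_pt n j) = f (grid_pt n j))"
  proof (rule ex1I[of _ "sk_interp a n f"])
    show "sk_interp a n f \<in> SK a n \<and> (\<forall>j\<in>Omega n. sk_interp a n f (grid_pt n j) = f (grid_pt n j))"
      using I G by blast
  next
    fix s assume "s \<in> SK a n \<and> (\<forall>j\<in>Omega n. s (grid_pt n j) = f (grid_pt n j))"
    then show "s = sk_interp a n f"
      using SK_unique[OF assms(1-3), of s "sk_interp a n f"] I G by auto
  qed
  show ?thesis using U I G by blast
qed


end
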